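(* Let $A\subseteq\mathbb{R}^m$ and $B\subseteq\mathbb{R}^n$ be set-germs at $0$ with $0\in\overline{A}$ and $0\in\overline{B}$. Then $$D(A\times B)\subseteq\{(ta,\sqrt{1-t^2}\,b):\ a\in D(A),\ b\in D(B),\ t\in[0,1]\}.$$ Moreover, if both $A$ and $B$ satisfy condition (SSP), then equality holds.
   Context: For a set-germ $A\subset\mathbb{R}^k$ at $0$ with $0\in\overline A$, $D(A)=\{a\in S^{k-1}:\exists\, x_i\in A\setminus\{0\},\ x_i\to0,\ x_i/\|x_i\|\to a\}$ (for $A\times B$ this is computed in $\mathbb{R}^{m+n}$ at $(0,0)$). For sequences, $\|u_m\|\ll\|v_m\|,\|w_m\|$ means $\|u_m\|/\|v_m\|\to0$ and $\|u_m\|/\|w_m\|\to0$. $A$ satisfies condition (SSP) if for every sequence $a_m\in\mathbb{R}^k$ tending to $0$ with $\lim a_m/\|a_m\|\in D(A)$ there is a sequence $b_m\in A$ with $\|a_m-b_m\|\ll\|a_m\|,\|b_m\|$. *)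

theory Defs
  imports "HOL-Analysis.Analysis"
begin

definition tangent_dirs :: "'a::real_normed_vector set \<Rightarrow> 'a set" where
  "tangent_dirs A = {d. norm d = 1 \<and>
     (\<exists>x::nat \<Rightarrow> 'a. (\<forall>i. x i \<in> A - {0}) \<and> x \<longlonglongrightarrow> 0 \<and>
        (\<lambda>i. x i /\<^sub>R norm (x i)) \<longlonglongrightarrow> d)}"

definition SSP :: "'a::real_normed_vector set \<Rightarrow> bool" where
  "SSP A \<longleftrightarrow> (\<forall>a::nat \<Rightarrow> 'a. a \<longlonglongrightarrow> 0 \<and>
      (\<exists>d\<in>tangent_dirs A. (\<lambda>m. a m /\<^sub>R norm (a m)) \<longlonglongrightarrow> d) \<longrightarrow>
      (\<exists>b::nat \<Rightarrow> 'a. (\<forall>m. b m \<in> A) \<and>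
         (\<lambda>m. norm (a m - b m) / norm (a m)) \<longlonglongrightarrow> 0 \<and>
         (\<lambda>m. norm (a m - b m) / norm (b m)) \<longlonglongrightarrow> 0))"

end

theory Submission
  imports Defs
begin

lemma dir_lemma:
  fixes x :: "nat \<Rightarrow> 'a::real_normed_vector" and r :: "nat \<Rightarrow> real"
  assumes rpos: "\<And>i. r i > 0" and r0: "r \<longlonglongrightarrow> 0"
    and xc: "(\<lambda>i. x i /\<^sub>R r i) \<longlonglongrightarrow> c" and cnz: "c \<noteq> 0"
    and ev: "eventually (\<lambda>i. x i \<in> A) sequentially"
  shows "c /\<^sub>R norm c \<in> tangent_dirs A"
proof -
  have "(\<lambda>i. r i *\<^sub>R (x i /\<^sub>R r i)) \<longlonglongrightarrow> 0 *\<^sub>R c"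
    by (intro tendsto_scaleR r0 xc)
  moreover have "\<And>i. r i *\<^sub>R (x i /\<^sub>R r i) = x i"
  proof -
    fix i have "r i \<noteq> 0" using rpos[of i] by simp
    thus "r i *\<^sub>R (x i /\<^sub>R r i) = x i" by simp
  qed
  ultimately have x0: "x \<longlonglongrightarrow> 0" by simp
  have "(\<lambda>i. norm (x i /\<^sub>R r i)) \<longlonglongrightarrow> norm c" by (intro tendsto_norm xc)
  moreover have "\<And>i. norm (x i /\<^sub>R r i) = norm (x i) / r i" using rpos
    by (simp add: divide_inverse_commute less_imp_le)
  ultimately have nr: "(\<lambda>i. norm (x i) / r i) \<longlonglongrightarrow> norm c" by simp
  have "eventually (\<lambda>i. norm (x i) / r i > 0) sequentially"
    using order_tendstoD(1)[OF nr] cnz by simp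
  hence evnz: "eventually (\<lambda>i. x i \<noteq> 0) sequentially"
    by (rule eventually_mono) auto
  have "(\<lambda>i. inverse (norm (x i) / r i) *\<^sub>R (x i /\<^sub>R r i)) \<longlonglongrightarrow> inverse (norm c) *\<^sub>R c"
    by (intro tendsto_scaleR tendsto_inverse nr xc) (simp add: cnz)
  moreover have "eventually (\<lambda>i. inverse (norm (x i) / r i) *\<^sub>R (x i /\<^sub>R r i) = x i /\<^sub>R norm (x i)) sequentially"
    using evnz
  proof (rule eventually_mono)
    fix i assume "x i \<noteq> 0"
    moreover have "r i \<noteq> 0" using rpos[of i] by simp
    ultimately show "inverse (norm (x i) / r i) *\<^sub>R (x i /\<^sub>R r i) = x i /\<^sub>R norm (x i)"
      by (simp add: divide_inverse)
  qed
  ultimately have dir: "(\<lambda>i. x i /\<^sub>R norm (x i)) \<longlonglongrightarrow> c /\<^sub>R norm c"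
    by (rule Lim_transform_eventually)
  obtain N where N: "\<And>i. i \<ge> N \<Longrightarrow> x i \<in> A \<and> x i \<noteq> 0"
    using eventually_conj[OF ev evnz] unfolding eventually_sequentially by blast
  show ?thesis unfolding tangent_dirs_def
  proof (intro CollectI conjI exI[of _ "\<lambda>i. x (i + N)"] allI)
    show "norm (c /\<^sub>R norm c) = 1" using cnz by simp
    show "x (i + N) \<in> A - {0}" for i using N[of "i+N"] by simp
    show "(\<lambda>i. x (i + N)) \<longlonglongrightarrow> 0" using LIMSEQ_ignore_initial_segment[OF x0] .
    show "(\<lambda>i. x (i + N) /\<^sub>R norm (x (i + N))) \<longlonglongrightarrow> c /\<^sub>R norm c"
      using LIMSEQ_ignore_initial_segment[OF dir] .
  qed
qed

lemma dirs_nonempty: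
  fixes A :: "'a::euclidean_space set"
  assumes "0 islimpt A"
  obtains d where "d \<in> tangent_dirs A"
proof -
  obtain f where f: "\<And>n. f n \<in> A - {0}" "f \<longlonglongrightarrow> 0"
    using assms unfolding islimpt_sequential by blast
  have sph: "\<forall>n. f n /\<^sub>R norm (f n) \<in> sphere 0 1" using f(1) by simp
  obtain l sb where l: "l \<in> sphere 0 1" "strict_mono sb"
     "((\<lambda>n. f n /\<^sub>R norm (f n)) \<circ> sb) \<longlonglongrightarrow> l"
    by (rule seq_compactE[OF compact_imp_seq_compact[OF compact_sphere[of 0 1]] sph])
  have "l \<in> tangent_dirs A" unfolding tangent_dirs_def
  proof (intro CollectI conjI exI[of _ "f \<circ> sb"] allI)
    show "norm l = 1" using l(1) by simp
    show "(f \<circ> sb) i \<in> A - {0}" for i using f(1) by simp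
    show "(f \<circ> sb) \<longlonglongrightarrow> 0" using LIMSEQ_subseq_LIMSEQ[OF f(2) l(2)] .
    show "(\<lambda>i. (f \<circ> sb) i /\<^sub>R norm ((f \<circ> sb) i)) \<longlonglongrightarrow> l" using l(3) by (simp add: o_def)
  qed
  thus ?thesis using that by blast
qed

lemma small_seq:
  fixes B :: "'b::real_normed_vector set"
  assumes "0 islimpt B" and rpos: "\<And>i. r i > 0"
  obtains y where "\<And>i. y i \<in> B" "(\<lambda>i. y i /\<^sub>R r i) \<longlonglongrightarrow> 0"
proof -
  have "\<forall>i. \<exists>z\<in>B. z \<noteq> 0 \<and> dist z 0 < r i / real (Suc i)"
    using assms(1) rpos unfolding islimpt_approachable by simp
  then obtain y where y: "\<And>i. y i \<in> B" "\<And>i. dist (y i) 0 < r i / real (Suc i)"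
    by metis
  have "(\<lambda>i. y i /\<^sub>R r i) \<longlonglongrightarrow> 0"
  proof (rule Lim_null_comparison)
    show "\<forall>\<^sub>F i in sequentially. norm (y i /\<^sub>R r i) \<le> inverse (real (Suc i))"
    proof (intro always_eventually allI)
      fix i
      have "norm (y i) < r i / real (Suc i)" using y(2)[of i] by simp
      hence "norm (y i) / r i \<le> inverse (real (Suc i))" using rpos[of i]
        by (simp add: field_simps)
      thus "norm (y i /\<^sub>R r i) \<le> inverse (real (Suc i))" using rpos[of i]
        by (simp add: divide_inverse_commute less_imp_le)
    qed
    show "(\<lambda>i. inverse (real (Suc i))) \<longlonglongrightarrow> 0" by (rule LIMSEQ_inverse_real_of_nat)
  qed
  thus ?thesis using that y(1) by blast
qed

lemma pair_dir:
  fixes x :: "nat \<Rightarrow> 'a::real_normed_vector" and y :: "nat \<Rightarrow> 'b::real_normed_vector"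
  assumes rpos: "\<And>i. r i > 0" and r0: "r \<longlonglongrightarrow> 0"
    and xc: "(\<lambda>i. x i /\<^sub>R r i) \<longlonglongrightarrow> c" and yd: "(\<lambda>i. y i /\<^sub>R r i) \<longlonglongrightarrow> d"
    and n1: "norm (c, d) = 1"
    and xA: "\<And>i. x i \<in> A" and yB: "\<And>i. y i \<in> B"
  shows "(c, d) \<in> tangent_dirs (A \<times> B)"
proof -
  have "(\<lambda>i. (x i, y i) /\<^sub>R r i) \<longlonglongrightarrow> (c, d)"
    using tendsto_Pair[OF xc yd] by simp
  moreover have "(c, d) \<noteq> 0" using n1 by auto
  ultimately have "(c, d) /\<^sub>R norm (c, d) \<in> tangent_dirs (A \<times> B)"
    by (intro dir_lemma[OF rpos r0, where x="\<lambda>i. (x i, y i)"]) (auto simp: xA yB)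
  thus ?thesis using n1 by simp
qed

lemma fwd:
  fixes A :: "'a::euclidean_space set" and B :: "'b::euclidean_space set"
  assumes "0 islimpt A" and "0 islimpt B" and p: "p \<in> tangent_dirs (A \<times> B)"
  shows "p \<in> {(t *\<^sub>R a, sqrt (1 - t\<^sup>2) *\<^sub>R b) | a b t. a \<in> tangent_dirs A \<and> b \<in> tangent_dirs B \<and> t \<in> {0..1}}"
proof -
  obtain u v where puv: "p = (u, v)" by fastforce
  from p obtain z where z: "\<And>i. z i \<in> A \<times> B - {0}" "z \<longlonglongrightarrow> 0"
      "(\<lambda>i. z i /\<^sub>R norm (z i)) \<longlonglongrightarrow> (u, v)" and n1: "norm (u, v) = 1"
    unfolding tangent_dirs_def puv by blast
  define r where "r i = norm (z i)" for i
  have rpos: "\<And>i. r i > 0" using z(1) by (simp add: r_def)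
  have r0: "r \<longlonglongrightarrow> 0" unfolding r_def using tendsto_norm[OF z(2)] by simp
  have xu: "(\<lambda>i. fst (z i) /\<^sub>R r i) \<longlonglongrightarrow> u"
    using tendsto_fst[OF z(3)] by (simp add: r_def)
  have yv: "(\<lambda>i. snd (z i) /\<^sub>R r i) \<longlonglongrightarrow> v"
    using tendsto_snd[OF z(3)] by (simp add: r_def)
  have xA: "eventually (\<lambda>i. fst (z i) \<in> A) sequentially" using z(1) by (auto simp: mem_Times_iff)
  have yB: "eventually (\<lambda>i. snd (z i) \<in> B) sequentially" using z(1) by (auto simp: mem_Times_iff)
  have sq: "(norm u)\<^sup>2 + (norm v)\<^sup>2 = 1" using n1 unfolding norm_Pair
    by (metis real_sqrt_eq_1_iff)
  obtain a where a: "a \<in> tangent_dirs A" "u = norm u *\<^sub>R a"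
  proof (cases "u = 0")
    case True
    obtain a where "a \<in> tangent_dirs A" using dirs_nonempty[OF assms(1)] by blast
    thus ?thesis using that True by simp
  next
    case False
    have "u /\<^sub>R norm u \<in> tangent_dirs A" by (rule dir_lemma[OF rpos r0 xu False xA])
    thus ?thesis using that False by simp
  qed
  obtain b where b: "b \<in> tangent_dirs B" "v = norm v *\<^sub>R b"
  proof (cases "v = 0")
    case True
    obtain b where "b \<in> tangent_dirs B" using dirs_nonempty[OF assms(2)] by blast
    thus ?thesis using that True by simp
  next
    case False
    have "v /\<^sub>R norm v \<in> tangent_dirs B" by (rule dir_lemma[OF rpos r0 yv False yB])
    thus ?thesis using that False by simp
  qed
  have t1: "norm u \<le> 1" using sq
    by (metis abs_norm_cancel abs_square_le_1 le_add_same_cancel1 zero_le_power2)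
  have "sqrt (1 - (norm u)\<^sup>2) = norm v" using sq
    by (metis add_diff_cancel_left' norm_ge_zero real_sqrt_abs real_sqrt_unique)
  hence "p = (norm u *\<^sub>R a, sqrt (1 - (norm u)\<^sup>2) *\<^sub>R b)" using a b puv by simp
  thus ?thesis using a(1) b(1) t1 by fastforce
qed

lemma bwd:
  fixes A :: "'a::euclidean_space set" and B :: "'b::euclidean_space set"
  assumes lA: "0 islimpt A" and lB: "0 islimpt B" and ssp: "SSP A"
    and a: "a \<in> tangent_dirs A" and b: "b \<in> tangent_dirs B" and t: "0 \<le> t" "t \<le> 1"
  shows "(t *\<^sub>R a, sqrt (1 - t\<^sup>2) *\<^sub>R b) \<in> tangent_dirs (A \<times> B)"
proof -
  define s where "s = sqrt (1 - t\<^sup>2)"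
  have s0: "s \<ge> 0" unfolding s_def using t by (simp add: abs_square_le_1)
  have s2: "s\<^sup>2 = 1 - t\<^sup>2" unfolding s_def using t by (simp add: abs_square_le_1)
  have na: "norm a = 1" and nb: "norm b = 1" using a b by (auto simp: tangent_dirs_def)
  have nst: "norm (t *\<^sub>R a, s *\<^sub>R b) = 1"
    unfolding norm_Pair using na nb t s0 s2 by simp
  show ?thesis unfolding s_def[symmetric]
  proof (cases "t = 1")
    case True
    from a obtain x where x: "\<And>i. x i \<in> A - {0}" "x \<longlonglongrightarrow> 0"
        "(\<lambda>i. x i /\<^sub>R norm (x i)) \<longlonglongrightarrow> a"
      unfolding tangent_dirs_def by blast
    define r where "r i = norm (x i)" for i
    have rpos: "\<And>i. r i > 0" using x(1) by (simp add: r_def)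
    have r0: "r \<longlonglongrightarrow> 0" unfolding r_def using tendsto_norm[OF x(2)] by simp
    obtain y where y: "\<And>i. y i \<in> B" "(\<lambda>i. y i /\<^sub>R r i) \<longlonglongrightarrow> 0"
      using small_seq[where r=r, OF lB rpos] by metis
    have xa: "(\<lambda>i. x i /\<^sub>R r i) \<longlonglongrightarrow> a" using x(3) by (simp add: r_def)
    have xA: "\<And>i. x i \<in> A" using x(1) by blast
    have na0: "norm (a, 0::'b) = 1" using na by (simp add: norm_Pair)
    have "s\<^sup>2 = 0" using s2 True by simp
    hence "s = 0" by simp
    hence "(t *\<^sub>R a, s *\<^sub>R b) = (a, 0)" using True by simp
    moreover have "(a, 0) \<in> tangent_dirs (A \<times> B)"
      by (rule pair_dir[OF rpos r0 xa y(2) na0 xA y(1)])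
    ultimately show "(t *\<^sub>R a, s *\<^sub>R b) \<in> tangent_dirs (A \<times> B)" by (simp only:)
  next
    case False
    hence tl1: "t < 1" using t by simp
    hence "t\<^sup>2 < 1" using t by (simp add: abs_square_less_1)
    hence "s\<^sup>2 > 0" using s2 by simp
    hence "s \<noteq> 0" by auto
    hence spos: "s > 0" using s0 by simp
    from b obtain y where y: "\<And>i. y i \<in> B - {0}" "y \<longlonglongrightarrow> 0"
        "(\<lambda>i. y i /\<^sub>R norm (y i)) \<longlonglongrightarrow> b"
      unfolding tangent_dirs_def by blast
    define r where "r i = norm (y i) / s" for i
    have rpos: "\<And>i. r i > 0" using y(1) spos by (simp add: r_def)
    have r0: "r \<longlonglongrightarrow> 0" unfolding r_def using tendsto_divide[OF tendsto_norm[OF y(2)] tendsto_const[of s]] spos by simp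
    have "(\<lambda>i. s *\<^sub>R (y i /\<^sub>R norm (y i))) \<longlonglongrightarrow> s *\<^sub>R b"
      by (intro tendsto_scaleR tendsto_const y(3))
    moreover have "\<And>i. s *\<^sub>R (y i /\<^sub>R norm (y i)) = y i /\<^sub>R r i"
      using spos by (simp add: r_def divide_inverse)
    ultimately have yb: "(\<lambda>i. y i /\<^sub>R r i) \<longlonglongrightarrow> s *\<^sub>R b" by (simp only:)
    obtain x where xA: "\<And>i. x i \<in> A" and xa: "(\<lambda>i. x i /\<^sub>R r i) \<longlonglongrightarrow> t *\<^sub>R a"
    proof (cases "t = 0")
      case True
      obtain x where x1: "\<And>i. x i \<in> A" and x2: "(\<lambda>i. x i /\<^sub>R r i) \<longlonglongrightarrow> 0"
        using small_seq[where r=r, OF lA rpos] by metis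
      have "(\<lambda>i. x i /\<^sub>R r i) \<longlonglongrightarrow> t *\<^sub>R a" using x2 True by simp
      from that[OF x1 this] show ?thesis .
    next
      case False
      hence tpos: "t > 0" using t by simp
      define am where "am i = (t * r i) *\<^sub>R a" for i
      have am0: "am \<longlonglongrightarrow> 0" unfolding am_def
        using tendsto_scaleR[OF tendsto_mult[OF tendsto_const[of t] r0] tendsto_const[of a]] by simp
      have "\<And>i. am i /\<^sub>R norm (am i) = a"
      proof -
        fix i
        have tr: "t * r i > 0" using tpos rpos[of i] by simp
        have "norm (am i) = t * r i" using tr na by (simp add: am_def)
        hence "am i /\<^sub>R norm (am i) = (inverse (t * r i) * (t * r i)) *\<^sub>R a"
          by (simp add: am_def)
        also have "\<dots> = a" using tr by (simp only: left_inverse less_irrefl scaleR_one)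
        finally show "am i /\<^sub>R norm (am i) = a" .
      qed
      hence "\<exists>d\<in>tangent_dirs A. (\<lambda>m. am m /\<^sub>R norm (am m)) \<longlonglongrightarrow> d" using a by auto
      then obtain x where xA: "\<And>m. x m \<in> A"
        and xr: "(\<lambda>m. norm (am m - x m) / norm (am m)) \<longlonglongrightarrow> 0"
        using ssp am0 unfolding SSP_def by blast
      have "(\<lambda>i. x i /\<^sub>R r i - t *\<^sub>R a) \<longlonglongrightarrow> 0"
      proof (rule Lim_null_comparison)
        show "\<forall>\<^sub>F i in sequentially. norm (x i /\<^sub>R r i - t *\<^sub>R a) \<le> t * (norm (am i - x i) / norm (am i))"
        proof (intro always_eventually allI)
          fix i
          have nam: "norm (am i) = t * r i" using tpos rpos[of i] na by (simp add: am_def)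
          have "x i /\<^sub>R r i - t *\<^sub>R a = (x i - am i) /\<^sub>R r i"
            using rpos[of i] by (simp add: am_def algebra_simps)
          hence "norm (x i /\<^sub>R r i - t *\<^sub>R a) = norm (am i - x i) / r i"
            using rpos[of i] by (simp add: norm_minus_commute divide_inverse_commute less_imp_le)
          also have "\<dots> = t * (norm (am i - x i) / norm (am i))"
            using nam tpos rpos[of i] by (simp add: field_simps)
          finally show "norm (x i /\<^sub>R r i - t *\<^sub>R a) \<le> t * (norm (am i - x i) / norm (am i))" by simp
        qed
        show "(\<lambda>i. t * (norm (am i - x i) / norm (am i))) \<longlonglongrightarrow> 0"
          using tendsto_mult[OF tendsto_const[of t] xr] by simp
      qed
      hence "(\<lambda>i. (x i /\<^sub>R r i - t *\<^sub>R a) + t *\<^sub>R a) \<longlonglongrightarrow> 0 + t *\<^sub>R a"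
        by (intro tendsto_add tendsto_const)
      hence "(\<lambda>i. x i /\<^sub>R r i) \<longlonglongrightarrow> t *\<^sub>R a" by simp
      thus ?thesis using that xA by blast
    qed
    have yB: "\<And>i. y i \<in> B" using y(1) by blast
    show "(t *\<^sub>R a, s *\<^sub>R b) \<in> tangent_dirs (A \<times> B)" by (rule pair_dir[OF rpos r0 xa yb nst xA yB])
  qed
qed

theorem proposition2p34:
  fixes A :: "'a::euclidean_space set" and B :: "'b::euclidean_space set"
  assumes "0 islimpt A" and "0 islimpt B"
  shows "tangent_dirs (A \<times> B) \<subseteq>
           {(t *\<^sub>R a, sqrt (1 - t\<^sup>2) *\<^sub>R b) | a b t. a \<in> tangent_dirs A \<and> b \<in> tangent_dirs B \<and> t \<in> {0..1}}
       \<and> (SSP A \<and> SSP B \<longrightarrow>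
           tangent_dirs (A \<times> B) =
           {(t *\<^sub>R a, sqrt (1 - t\<^sup>2) *\<^sub>R b) | a b t. a \<in> tangent_dirs A \<and> b \<in> tangent_dirs B \<and> t \<in> {0..1}})"
proof -
  have sub: "tangent_dirs (A \<times> B) \<subseteq>
           {(t *\<^sub>R a, sqrt (1 - t\<^sup>2) *\<^sub>R b) | a b t. a \<in> tangent_dirs A \<and> b \<in> tangent_dirs B \<and> t \<in> {0..1}}"
    by (intro subsetI fwd[OF assms])
  have eq: "SSP A \<and> SSP B \<longrightarrow> tangent_dirs (A \<times> B) = {(t *\<^sub>R a, sqrt (1 - t\<^sup>2) *\<^sub>R b) | a b t. a \<in> tangent_dirs A \<and> b \<in> tangent_dirs B \<and> t \<in> {0..1}}"
  proof
    assume "SSP A \<and> SSP B"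
    hence ssp: "SSP A" by simp
    show "tangent_dirs (A \<times> B) = {(t *\<^sub>R a, sqrt (1 - t\<^sup>2) *\<^sub>R b) | a b t. a \<in> tangent_dirs A \<and> b \<in> tangent_dirs B \<and> t \<in> {0..1}}"
    proof (rule equalityI[OF sub], rule subsetI)
      fix p assume "p \<in> {(t *\<^sub>R a, sqrt (1 - t\<^sup>2) *\<^sub>R b) | a b t. a \<in> tangent_dirs A \<and> b \<in> tangent_dirs B \<and> t \<in> {0..1}}"
      then obtain a b t where p: "p = (t *\<^sub>R a, sqrt (1 - t\<^sup>2) *\<^sub>R b)"
        and ab: "a \<in> tangent_dirs A" "b \<in> tangent_dirs B" and t: "t \<in> {0..1}"
        by blast
      have t0: "0 \<le> t" and t1: "t \<le> 1" using t by auto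
      show "p \<in> tangent_dirs (A \<times> B)" unfolding p
        by (rule bwd[OF assms ssp ab t0 t1])
    qed
  qed
  show ?thesis by (rule conjI[OF sub eq])
qed

end
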